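(* Let $U_1,\ldots,U_K$ be mutually commuting unitary operators on a Hilbert space $\mathcal{H}_Q$ of finite dimension $D_Q$. If $U_1,\ldots,U_K$ are unambiguously distinguishable, then $K\le D_Q$.
   Context: A finite list of unitary operators $U_1,\ldots,U_K$ on a finite-dimensional Hilbert space $\mathcal{H}_Q$ is called unambiguously distinguishable if there exist a finite-dimensional Hilbert space $\mathcal{H}_A$ (an ancilla) and a unit vector $|\psi\rangle\in\mathcal{H}_Q\otimes\mathcal{H}_A$ such that the $K$ output vectors $(U_j\otimes\mathbb{1}_A)|\psi\rangle$, $j=1,\ldots,K$, are linearly independent (equivalently, some measurement on the output identifies $j$ with zero error probability and with nonzero success probability for every $j$). *)

theory Defs
  imports Complex_Main
begin

(* Operators on H_Q = C^D are D x D complex matrices w.r.t. a fixed orthonormal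
   basis, represented as functions  nat => nat => complex  (entries (i,j), i,j < D).
   Vectors in H_Q (x) H_A = C^DQ (x) C^DA are represented by their coefficients
   psi q a in the product basis |q> (x) |a>, q < DQ, a < DA. *)

definition unitary_op :: "nat \<Rightarrow> (nat \<Rightarrow> nat \<Rightarrow> complex) \<Rightarrow> bool" where
  "unitary_op D U \<longleftrightarrow>
     (\<forall>i<D. \<forall>k<D. (\<Sum>j<D. U i j * cnj (U k j)) = (if i = k then 1 else 0)) \<and>
     (\<forall>i<D. \<forall>k<D. (\<Sum>j<D. cnj (U j i) * U j k) = (if i = k then 1 else 0))"

definition commute_op :: "nat \<Rightarrow> (nat \<Rightarrow> nat \<Rightarrow> complex) \<Rightarrow> (nat \<Rightarrow> nat \<Rightarrow> complex) \<Rightarrow> bool" where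
  "commute_op D U V \<longleftrightarrow>
     (\<forall>i<D. \<forall>k<D. (\<Sum>j<D. U i j * V j k) = (\<Sum>j<D. V i j * U j k))"

definition tensor_id_apply ::
  "nat \<Rightarrow> (nat \<Rightarrow> nat \<Rightarrow> complex) \<Rightarrow> (nat \<Rightarrow> nat \<Rightarrow> complex) \<Rightarrow> nat \<Rightarrow> nat \<Rightarrow> complex" where
  "tensor_id_apply DQ U psi q a = (\<Sum>q'<DQ. U q q' * psi q' a)"

definition unit_vec :: "nat \<Rightarrow> nat \<Rightarrow> (nat \<Rightarrow> nat \<Rightarrow> complex) \<Rightarrow> bool" where
  "unit_vec DQ DA psi \<longleftrightarrow> (\<Sum>q<DQ. \<Sum>a<DA. (cmod (psi q a))\<^sup>2) = 1"

definition lin_indep_family :: "nat \<Rightarrow> nat \<Rightarrow> nat \<Rightarrow> (nat \<Rightarrow> nat \<Rightarrow> nat \<Rightarrow> complex) \<Rightarrow> bool" where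
  "lin_indep_family DQ DA K v \<longleftrightarrow>
     (\<forall>c :: nat \<Rightarrow> complex.
        (\<forall>q<DQ. \<forall>a<DA. (\<Sum>j<K. c j * v j q a) = 0) \<longrightarrow> (\<forall>j<K. c j = 0))"

definition unamb_distinguishable :: "nat \<Rightarrow> nat \<Rightarrow> (nat \<Rightarrow> nat \<Rightarrow> nat \<Rightarrow> complex) \<Rightarrow> bool" where
  "unamb_distinguishable DQ K U \<longleftrightarrow>
     (\<exists>DA psi. unit_vec DQ DA psi \<and>
        lin_indep_family DQ DA K (\<lambda>j. tensor_id_apply DQ (U j) psi))"

end

theory Submission
  imports Defs "HOL-Library.Function_Algebras"
begin

context vector_space
begin

lemma card_le_dim_fd:
  assumes "B \<subseteq> span V" "independent B" "V \<subseteq> span T" "finite T"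
  shows "finite B \<and> card B \<le> dim V"
proof -
  obtain C where C: "C \<subseteq> V" "independent C" "V \<subseteq> span C" "card C = dim V"
    by (rule basis_exists)
  have fC: "finite C" using independent_span_bound[OF assms(4) C(2)] C(1) assms(3) by auto
  have "B \<subseteq> span C" using assms(1) C(3)
    by (metis span_mono span_span subset_trans)
  from independent_span_bound[OF fC assms(2) this] C(4) show ?thesis by auto
qed

lemma dim_union_ge:
  assumes "span X \<inter> span Y = {0}" "X \<subseteq> span T" "Y \<subseteq> span T" "finite T"
  shows "dim X + dim Y \<le> dim (X \<union> Y)"
proof -
  obtain BX where BX: "BX \<subseteq> X" "independent BX" "X \<subseteq> span BX" "card BX = dim X"
    by (rule basis_exists)
  obtain BY where BY: "BY \<subseteq> Y" "independent BY" "Y \<subseteq> span BY" "card BY = dim Y"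
    by (rule basis_exists)
  have fX: "finite BX" using independent_span_bound[OF assms(4) BX(2)] BX(1) assms(2) by auto
  have fY: "finite BY" using independent_span_bound[OF assms(4) BY(2)] BY(1) assms(3) by auto
  have disj: "BX \<inter> BY = {}"
  proof (rule ccontr)
    assume "BX \<inter> BY \<noteq> {}"
    then obtain z where z: "z \<in> BX" "z \<in> BY" by auto
    then have "z \<in> span X" "z \<in> span Y" using BX(1) BY(1) span_base by auto
    then have "z = 0" using assms(1) by auto
    then show False using z BX(2) dependent_zero by auto
  qed
  have ind: "independent (BX \<union> BY)"
  proof (rule independent_if_scalars_zero)
    show "finite (BX \<union> BY)" using fX fY by auto
    fix f x assume sum0: "(\<Sum>x\<in>BX \<union> BY. f x *s x) = 0" and x: "x \<in> BX \<union> BY"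
    let ?sx = "\<Sum>x\<in>BX. f x *s x" and ?sy = "\<Sum>x\<in>BY. f x *s x"
    have "?sx + ?sy = (\<Sum>x\<in>BX \<union> BY. f x *s x)" by (rule sum.union_disjoint[OF fX fY disj, symmetric])
    then have "?sx + ?sy = 0" using sum0 by simp
    then have eq: "?sx = - ?sy" by (simp add: eq_neg_iff_add_eq_0)
    have "?sx \<in> span X"
    proof (rule span_sum)
      fix x assume "x \<in> BX" then have "x \<in> span X" using BX(1) span_base by blast
      then show "f x *s x \<in> span X" by (rule span_scale)
    qed
    moreover have "?sy \<in> span Y"
    proof (rule span_sum)
      fix x assume "x \<in> BY" then have "x \<in> span Y" using BY(1) span_base by blast
      then show "f x *s x \<in> span Y" by (rule span_scale)
    qed
    then have "- ?sy \<in> span Y" by (rule span_neg)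
    then have "?sx \<in> span Y" using eq by simp
    ultimately have "?sx \<in> span X \<inter> span Y" by blast
    then have "?sx = 0" using assms(1) by blast
    moreover have "?sy = 0" using \<open>?sx = 0\<close> eq by simp
    ultimately show "f x = 0" using x independentD[OF BX(2) fX order_refl] independentD[OF BY(2) fY order_refl]
      by auto
  qed
  have "card (BX \<union> BY) \<le> dim (X \<union> Y)"
    using card_le_dim_fd[OF _ ind, of "X \<union> Y" T] BX(1) BY(1) assms(2,3,4) span_superset by blast
  then show ?thesis using card_Un_disjoint[OF fX fY disj] BX(4) BY(4) by simp
qed

lemma rank_nullity_le:
  assumes add: "\<And>x y. f (x + y) = f x + f y" and hom: "\<And>c x. f (c *s x) = c *s f x"
    and L: "subspace L" "L \<subseteq> span T" "finite T"
    and fL: "f ` L \<subseteq> span T'" "finite T'"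
  shows "dim L \<le> dim (f ` L) + dim {x \<in> L. f x = 0}"
proof -
  have f0: "f 0 = 0" using hom[of 0 0] by simp
  have fsum: "f (\<Sum>x\<in>A. u x *s x) = (\<Sum>x\<in>A. u x *s f x)" for A u
  proof (induction A rule: infinite_finite_induct)
    case (infinite A) then show ?case using f0 by simp
  next
    case empty then show ?case using f0 by simp
  next
    case (insert x F) then show ?case by (simp add: add hom)
  qed
  let ?N = "{x \<in> L. f x = 0}"
  obtain B where B: "B \<subseteq> ?N" "independent B" "?N \<subseteq> span B" "card B = dim ?N"
    by (rule basis_exists)
  have "B \<subseteq> L" using B(1) by auto
  obtain C' where C': "B \<subseteq> C'" "C' \<subseteq> L" "independent C'" "L \<subseteq> span C'"
    using maximal_independent_subset_extend[OF \<open>B \<subseteq> L\<close> B(2)] by blast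
  have fC': "finite C'" using independent_span_bound[OF L(3) C'(3)] C'(2) L(2) by auto
  have cardC': "card C' = dim L" using basis_card_eq_dim[OF C'(2) C'(4) C'(3)] .
  define C where "C = C' - B"
  have fC: "finite C" "finite B" using fC' C'(1) C_def finite_subset by auto
  have key: "\<forall>x\<in>C. u x = 0" if u: "(\<Sum>x\<in>C. u x *s f x) = 0" for u
  proof -
    let ?z = "\<Sum>x\<in>C. u x *s x"
    have "?z \<in> L" using C'(2) C_def by (auto intro!: subspace_sum[OF L(1)] subspace_scale[OF L(1)])
    moreover have "f ?z = 0" using u fsum by simp
    ultimately have "?z \<in> span B" using B(3) by auto
    then obtain w where w: "?z = (\<Sum>b\<in>B. w b *s b)" using span_finite[OF fC(2)] by auto
    define v where "v x = (if x \<in> C then u x else - w x)" for x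
    have CB: "C' = C \<union> B" "C \<inter> B = {}" using C_def C'(1) by auto
    have "(\<Sum>x\<in>C'. v x *s x) = (\<Sum>x\<in>C. v x *s x) + (\<Sum>x\<in>B. v x *s x)"
      using CB sum.union_disjoint[OF fC(1) fC(2) CB(2)] by simp
    also have "(\<Sum>x\<in>C. v x *s x) = ?z" by (rule sum.cong) (auto simp: v_def)
    also have "(\<Sum>x\<in>B. v x *s x) = - (\<Sum>b\<in>B. w b *s b)"
      using CB(2) by (auto simp: v_def sum_negf[symmetric] intro!: sum.cong)
    finally have "(\<Sum>x\<in>C'. v x *s x) = 0" using w by simp
    then have "\<forall>x\<in>C'. v x = 0" using independentD[OF C'(3) fC' order_refl] by blast
    then show ?thesis using C_def v_def by auto
  qed
  have inj: "inj_on f C"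
  proof (rule inj_onI, rule ccontr)
    fix x y assume xy: "x \<in> C" "y \<in> C" "f x = f y" "x \<noteq> y"
    define u where "u z = (if z = x then 1 else if z = y then -1 else (0::'a))" for z
    have "(\<Sum>z\<in>C. u z *s f z) = (\<Sum>z\<in>{x,y}. u z *s f z)"
      by (rule sum.mono_neutral_right) (use fC xy in \<open>auto simp: u_def\<close>)
    also have "\<dots> = 0" using xy by (simp add: u_def)
    finally have "\<forall>z\<in>C. u z = 0" using key by blast
    then have "u x = 0" using xy(1) by blast
    then show False by (simp add: u_def)
  qed
  have indf: "independent (f ` C)"
  proof (rule independent_if_scalars_zero)
    show "finite (f ` C)" using fC by auto
    fix g y assume s: "(\<Sum>y\<in>f ` C. g y *s y) = 0" and y: "y \<in> f ` C"
    have "(\<Sum>x\<in>C. g (f x) *s f x) = 0" using s sum.reindex[OF inj, of "\<lambda>y. g y *s y"] by simp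
    then have "\<forall>x\<in>C. g (f x) = 0" using key[of "\<lambda>x. g (f x)"] by simp
    then show "g y = 0" using y by auto
  qed
  have "f ` C \<subseteq> span (f ` L)" using C_def C'(2) span_superset by blast
  then have "card (f ` C) \<le> dim (f ` L)" using card_le_dim_fd[OF _ indf _ fL(2)] fL(1) by blast
  then have "card C \<le> dim (f ` L)" using card_image[OF inj] by simp
  moreover have "card C' = card C + card B" using card_Un_disjoint[OF fC(1) fC(2)] C_def C'(1)
    by (metis Diff_disjoint Diff_partition Int_commute Un_commute)
  ultimately show ?thesis using cardC' B(4) by linarith
qed

end


definition mm :: "nat \<Rightarrow> (nat \<Rightarrow> nat \<Rightarrow> complex) \<Rightarrow> (nat \<Rightarrow> nat \<Rightarrow> complex) \<Rightarrow> nat \<Rightarrow> nat \<Rightarrow> complex" where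
  "mm n X Y = (\<lambda>i k. \<Sum>j<n. X i j * Y j k)"

definition adj :: "(nat \<Rightarrow> nat \<Rightarrow> complex) \<Rightarrow> nat \<Rightarrow> nat \<Rightarrow> complex" where
  "adj X = (\<lambda>i j. cnj (X j i))"

definition idm :: "nat \<Rightarrow> nat \<Rightarrow> complex" where
  "idm = (\<lambda>i k. if i = k then 1 else 0)"

lemma mm_assoc: "mm n (mm n X Y) Z i l = mm n X (mm n Y Z) i l"
  unfolding mm_def
  by (simp add: sum_distrib_left sum_distrib_right mult.assoc) (rule sum.swap)

lemma mm_cong_left: "(\<And>j. j < n \<Longrightarrow> X i j = X' i j) \<Longrightarrow> mm n X Y i l = mm n X' Y i l"
  unfolding mm_def by (auto intro!: sum.cong)

lemma mm_cong_right: "(\<And>j. j < n \<Longrightarrow> Y j l = Y' j l) \<Longrightarrow> mm n X Y i l = mm n X Y' i l"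
  unfolding mm_def by (auto intro!: sum.cong)

lemma mm_idm_right: "k < n \<Longrightarrow> mm n X idm i k = X i k"
proof -
  assume k: "k < n"
  have "mm n X idm i k = (\<Sum>j<n. if j = k then X i k else 0)" unfolding mm_def idm_def by (rule sum.cong) auto
  then show ?thesis using k by simp
qed

lemma mm_idm_left: "i < n \<Longrightarrow> mm n idm X i k = X i k"
proof -
  assume i: "i < n"
  have "mm n idm X i k = (\<Sum>j<n. if i = j then X i k else 0)" unfolding mm_def idm_def by (rule sum.cong) auto
  then show ?thesis using i by simp
qed

lemma unitary_mm:
  assumes "unitary_op n A"
  shows "\<And>i k. i < n \<Longrightarrow> k < n \<Longrightarrow> mm n A (adj A) i k = idm i k"
    and "\<And>i k. i < n \<Longrightarrow> k < n \<Longrightarrow> mm n (adj A) A i k = idm i k"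
  using assms unfolding unitary_op_def mm_def adj_def idm_def by auto

lemma commute_mm:
  assumes "commute_op n A B"
  shows "\<And>i k. i < n \<Longrightarrow> k < n \<Longrightarrow> mm n A B i k = mm n B A i k"
  using assms unfolding commute_op_def mm_def by auto

lemma star_commute:
  assumes A: "unitary_op n A" and B: "unitary_op n B" and C: "commute_op n A B"
    and pq: "p < n" "q < n"
  shows "mm n (adj A) B p q = mm n B (adj A) p q"
proof -
  have AX: "mm n A (mm n (adj A) B) i k = B i k" if "i < n" "k < n" for i k
  proof -
    have "mm n A (mm n (adj A) B) i k = mm n (mm n A (adj A)) B i k" by (simp add: mm_assoc)
    also have "\<dots> = mm n idm B i k" using unitary_mm(1)[OF A] that by (intro mm_cong_left) auto
    also have "\<dots> = B i k" using that by (simp add: mm_idm_left)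
    finally show ?thesis .
  qed
  have AY: "mm n A (mm n B (adj A)) i k = B i k" if "i < n" "k < n" for i k
  proof -
    have "mm n A (mm n B (adj A)) i k = mm n (mm n A B) (adj A) i k" by (simp add: mm_assoc)
    also have "\<dots> = mm n (mm n B A) (adj A) i k" using commute_mm[OF C] that by (intro mm_cong_left) auto
    also have "\<dots> = mm n B (mm n A (adj A)) i k" by (simp add: mm_assoc)
    also have "\<dots> = mm n B idm i k" using unitary_mm(1)[OF A] that by (intro mm_cong_right) auto
    also have "\<dots> = B i k" using that by (simp add: mm_idm_right)
    finally show ?thesis .
  qed
  have cancel: "Y p q = mm n (adj A) (mm n A Y) p q" for Y
  proof -
    have "Y p q = mm n idm Y p q" using pq by (simp add: mm_idm_left)
    also have "\<dots> = mm n (mm n (adj A) A) Y p q"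
      using unitary_mm(2)[OF A] pq by (intro mm_cong_left) auto
    also have "\<dots> = mm n (adj A) (mm n A Y) p q" by (simp add: mm_assoc)
    finally show ?thesis .
  qed
  have "mm n (adj A) (mm n A (mm n (adj A) B)) p q = mm n (adj A) B p q"
    using AX pq by (intro mm_cong_right) auto
  moreover have "mm n (adj A) (mm n A (mm n B (adj A))) p q = mm n (adj A) B p q"
    using AY pq by (intro mm_cong_right) auto
  ultimately show ?thesis using cancel[of "mm n (adj A) B"] cancel[of "mm n B (adj A)"] by simp
qed


definition msc :: "complex \<Rightarrow> (nat \<Rightarrow> nat \<Rightarrow> complex) \<Rightarrow> nat \<Rightarrow> nat \<Rightarrow> complex" where
  "msc a X = (\<lambda>i j. a * X i j)"

interpretation M: vector_space msc
  by unfold_locales (auto simp: msc_def plus_fun_def algebra_simps)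

lemma sum_fun_apply2: "(sum F A) i j = (\<Sum>a\<in>A. F a i j)" for F :: "'a \<Rightarrow> nat \<Rightarrow> nat \<Rightarrow> complex"
  by (induction A rule: infinite_finite_induct) (auto simp: plus_fun_def zero_fun_def)

lemma sum_cnj_zero:
  fixes n :: nat and z :: "nat \<Rightarrow> complex"
  assumes "(\<Sum>i<n. cnj (z i) * z i) = 0"
  shows "\<forall>i<n. z i = 0"
proof -
  have "(\<Sum>i<n. cnj (z i) * z i) = (\<Sum>i<n. complex_of_real ((cmod (z i))^2))"
  proof (rule sum.cong[OF refl])
    fix i show "cnj (z i) * z i = complex_of_real ((cmod (z i))^2)"
      by (subst complex_norm_square) (rule mult.commute)
  qed
  also have "\<dots> = complex_of_real (\<Sum>i<n. (cmod (z i))^2)" by (rule of_real_sum[symmetric])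
  finally have calc: "(\<Sum>i<n. cnj (z i) * z i) = complex_of_real (\<Sum>i<n. (cmod (z i))^2)" .
  have "complex_of_real (\<Sum>i<n. (cmod (z i))^2) = 0" using trans[OF sym[OF calc] assms] .
  then have s0: "(\<Sum>i<n. (cmod (z i))^2) = 0" by (rule of_real_eq_0_iff[THEN iffD1])
  have iff: "(\<Sum>i<n. (cmod (z i))^2) = 0 \<longleftrightarrow> (\<forall>x\<in>{..<n}. (cmod (z x))^2 = 0)"
    by (rule sum_nonneg_eq_0_iff) simp_all
  have "\<forall>x\<in>{..<n}. (cmod (z x))^2 = 0" using iff s0 by blast
  then show ?thesis by simp
qed

definition SCp :: "nat \<Rightarrow> (nat \<Rightarrow> nat \<Rightarrow> complex) \<Rightarrow> (nat \<Rightarrow> nat \<Rightarrow> complex) \<Rightarrow> bool" where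
  "SCp n a b \<longleftrightarrow> (\<forall>p q. (\<Sum>i<n. cnj (a i p) * b i q) = (\<Sum>i<n. b p i * cnj (a q i)))"

lemma SCp_sub_right: "M.subspace {b. SCp n a b}"
proof (rule M.subspaceI)
  show "0 \<in> {b. SCp n a b}" by (simp add: SCp_def zero_fun_def)
  fix x y assume x: "x \<in> {b. SCp n a b}" and y: "y \<in> {b. SCp n a b}"
  then show "x + y \<in> {b. SCp n a b}"
    by (simp add: SCp_def plus_fun_def distrib_left distrib_right sum.distrib)
next
  fix c x assume x: "x \<in> {b. SCp n a b}"
  show "msc c x \<in> {b. SCp n a b}" unfolding SCp_def mem_Collect_eq
  proof (intro allI)
    fix p q
    have "(\<Sum>i<n. cnj (a i p) * msc c x i q) = c * (\<Sum>i<n. cnj (a i p) * x i q)"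
      by (simp add: msc_def sum_distrib_left algebra_simps)
    also have "\<dots> = c * (\<Sum>i<n. x p i * cnj (a q i))" using x by (simp add: SCp_def)
    also have "\<dots> = (\<Sum>i<n. msc c x p i * cnj (a q i))"
      by (simp add: msc_def sum_distrib_left algebra_simps)
    finally show "(\<Sum>i<n. cnj (a i p) * msc c x i q) = (\<Sum>i<n. msc c x p i * cnj (a q i))" .
  qed
qed

lemma SCp_sub_left: "M.subspace {a. SCp n a b}"
proof (rule M.subspaceI)
  show "0 \<in> {a. SCp n a b}" by (simp add: SCp_def zero_fun_def)
  fix x y assume x: "x \<in> {a. SCp n a b}" and y: "y \<in> {a. SCp n a b}"
  then show "x + y \<in> {a. SCp n a b}"
    by (simp add: SCp_def plus_fun_def distrib_left distrib_right sum.distrib)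
next
  fix c x assume x: "x \<in> {a. SCp n a b}"
  show "msc c x \<in> {a. SCp n a b}" unfolding SCp_def mem_Collect_eq
  proof (intro allI)
    fix p q
    have "(\<Sum>i<n. cnj (msc c x i p) * b i q) = cnj c * (\<Sum>i<n. cnj (x i p) * b i q)"
      by (simp add: msc_def sum_distrib_left algebra_simps)
    also have "\<dots> = cnj c * (\<Sum>i<n. b p i * cnj (x q i))" using x by (simp add: SCp_def)
    also have "\<dots> = (\<Sum>i<n. b p i * cnj (msc c x q i))"
      by (simp add: msc_def sum_distrib_left algebra_simps)
    finally show "(\<Sum>i<n. cnj (msc c x i p) * b i q) = (\<Sum>i<n. b p i * cnj (msc c x q i))" .
  qed
qed

definition ip :: "nat \<Rightarrow> (nat \<Rightarrow> nat \<Rightarrow> complex) \<Rightarrow> (nat \<Rightarrow> nat \<Rightarrow> complex) \<Rightarrow> complex" where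
  "ip n X Y = (\<Sum>i<n. cnj (X i 0) * Y i 0)"

lemma ip_sub_right: "M.subspace {y. ip n x y = 0}"
  unfolding M.subspace_def ip_def
  by (auto simp: plus_fun_def zero_fun_def msc_def distrib_left sum.distrib
      sum_distrib_left[symmetric] mult.assoc mult.left_commute)

lemma ip_sub_left: "M.subspace {x. ip n x y = 0}"
  unfolding M.subspace_def ip_def
  by (auto simp: plus_fun_def zero_fun_def msc_def distrib_right sum.distrib
      sum_distrib_left[symmetric] mult.assoc)

definition col :: "nat \<Rightarrow> (nat \<Rightarrow> nat \<Rightarrow> complex) \<Rightarrow> nat \<Rightarrow> nat \<Rightarrow> complex" where
  "col k a = (\<lambda>i j. if j = 0 then a i k else 0)"

lemma col_add: "col k (x + y) = col k x + col k y"
  by (auto simp: col_def plus_fun_def fun_eq_iff)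

lemma col_scale: "col k (msc c x) = msc c (col k x)"
  by (auto simp: col_def msc_def fun_eq_iff)

theorem corollary1:
  fixes DQ K :: nat and U :: "nat \<Rightarrow> nat \<Rightarrow> nat \<Rightarrow> complex"
  assumes "\<forall>j<K. unitary_op DQ (U j)"
    and "\<forall>j<K. \<forall>l<K. commute_op DQ (U j) (U l)"
    and "unamb_distinguishable DQ K U"
  shows "K \<le> DQ"
proof -
  obtain DA psi where psi: "lin_indep_family DQ DA K (\<lambda>j. tensor_id_apply DQ (U j) psi)"
    using assms(3) unfolding unamb_distinguishable_def by auto
  define Ut where "Ut j = (\<lambda>i k. if i < DQ \<and> k < DQ then U j i k else 0)" for j
  have indc: "\<forall>j<K. c j = 0" if h: "\<forall>i k. (\<Sum>j<K. c j * Ut j i k) = 0" for c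
  proof -
    have "\<forall>q<DQ. \<forall>a<DA. (\<Sum>j<K. c j * tensor_id_apply DQ (U j) psi q a) = 0"
    proof (intro allI impI)
      fix q a assume q: "q < DQ" and a: "a < DA"
      have "(\<Sum>j<K. c j * tensor_id_apply DQ (U j) psi q a)
          = (\<Sum>j<K. \<Sum>q'<DQ. c j * U j q q' * psi q' a)"
        unfolding tensor_id_apply_def by (simp add: sum_distrib_left mult.assoc)
      also have "\<dots> = (\<Sum>q'<DQ. \<Sum>j<K. c j * U j q q' * psi q' a)" by (rule sum.swap)
      also have "\<dots> = (\<Sum>q'<DQ. (\<Sum>j<K. c j * Ut j q q') * psi q' a)"
        using q by (auto simp: Ut_def sum_distrib_right intro!: sum.cong)
      also have "\<dots> = 0" using h by simp
      finally show "(\<Sum>j<K. c j * tensor_id_apply DQ (U j) psi q a) = 0" .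
    qed
    then show ?thesis using psi unfolding lin_indep_family_def by blast
  qed
  have inj: "inj_on Ut {..<K}"
  proof (rule inj_onI, rule ccontr)
    fix j l assume j: "j \<in> {..<K}" and l: "l \<in> {..<K}" and eq: "Ut j = Ut l" and ne: "j \<noteq> l"
    define c where "c x = (if x = j then 1 else if x = l then -1 else (0::complex))" for x
    have "\<forall>i k. (\<Sum>x<K. c x * Ut x i k) = 0"
    proof (intro allI)
      fix i k
      have "(\<Sum>x<K. c x * Ut x i k) = (\<Sum>x<K. (if x = j then Ut x i k else 0) - (if x = l then Ut x i k else 0))"
        by (rule sum.cong) (auto simp: c_def ne)
      also have "\<dots> = Ut j i k - Ut l i k" using j l by (simp add: sum_subtractf)
      also have "\<dots> = 0" using eq by simp
      finally show "(\<Sum>x<K. c x * Ut x i k) = 0" .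
    qed
    then have "c j = 0" using indc j by blast
    then show False by (simp add: c_def)
  qed
  define Us where "Us = Ut ` {..<K}"
  have finUs: "finite Us" unfolding Us_def by simp
  have cardUs: "card Us = K" using card_image[OF inj] unfolding Us_def by simp
  have indUs: "M.independent Us"
  proof (rule M.independent_if_scalars_zero[OF finUs])
    fix f x assume s: "(\<Sum>x\<in>Us. msc (f x) x) = 0" and x: "x \<in> Us"
    have s2: "(\<Sum>j<K. msc (f (Ut j)) (Ut j)) = 0"
      using s sum.reindex[OF inj, of "\<lambda>x. msc (f x) x"] by (simp add: Us_def)
    have "\<forall>i k. (\<Sum>j<K. f (Ut j) * Ut j i k) = 0"
    proof (intro allI)
      fix i k
      have "(\<Sum>j<K. msc (f (Ut j)) (Ut j)) i k = 0" using s2 by (simp add: zero_fun_def)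
      then show "(\<Sum>j<K. f (Ut j) * Ut j i k) = 0" by (simp add: sum_fun_apply2 msc_def)
    qed
    then have "\<forall>j<K. f (Ut j) = 0" using indc[of "\<lambda>j. f (Ut j)"] by blast
    then show "f x = 0" using x unfolding Us_def by auto
  qed
  define S where "S = M.span Us"
  have dimS: "M.dim S = K" using M.dim_span_eq_card_independent[OF indUs] cardUs S_def by simp
  have subS: "M.subspace S" unfolding S_def by simp

  define Q where "Q = {X. \<forall>i k. (DQ \<le> i \<or> DQ \<le> k) \<longrightarrow> X i k = (0::complex)}"
  have subQ: "M.subspace Q" unfolding M.subspace_def Q_def
    by (auto simp: msc_def plus_fun_def zero_fun_def)
  have SQ: "S \<subseteq> Q" unfolding S_def
    by (rule M.span_minimal[OF _ subQ]) (auto simp: Us_def Ut_def Q_def)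
  define unit where "unit (i::nat) (k::nat) = (\<lambda>a b. if a = i \<and> b = k then 1 else (0::complex))" for i k
  define EE where "EE = (\<lambda>p. unit (fst p) (snd p)) ` ({..<DQ} \<times> {..<DQ})"
  have finEE: "finite EE" unfolding EE_def by simp
  have QE: "Q \<subseteq> M.span EE"
  proof
    fix X assume X: "X \<in> Q"
    have "X = (\<Sum>p\<in>{..<DQ} \<times> {..<DQ}. msc (X (fst p) (snd p)) (unit (fst p) (snd p)))"
    proof (rule ext, rule ext)
      fix a b
      have "(\<Sum>p\<in>{..<DQ} \<times> {..<DQ}. msc (X (fst p) (snd p)) (unit (fst p) (snd p))) a b
          = (\<Sum>p\<in>{..<DQ} \<times> {..<DQ}. if p = (a, b) then X a b else 0)"
        unfolding sum_fun_apply2 by (rule sum.cong) (auto simp: msc_def unit_def)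
      also have "\<dots> = X a b" using X unfolding Q_def by (auto simp: not_le)
      finally show "X a b = (\<Sum>p\<in>{..<DQ} \<times> {..<DQ}. msc (X (fst p) (snd p)) (unit (fst p) (snd p))) a b"
        by simp
    qed
    also have "\<dots> \<in> M.span EE"
    proof (rule M.span_sum)
      fix p assume "p \<in> {..<DQ} \<times> {..<DQ}"
      then have "unit (fst p) (snd p) \<in> EE" unfolding EE_def by blast
      then show "msc (X (fst p) (snd p)) (unit (fst p) (snd p)) \<in> M.span EE"
        by (intro M.span_scale M.span_base)
    qed
    finally show "X \<in> M.span EE" .
  qed
  define Z where "Z = {X. \<forall>i j. ((j::nat) \<noteq> 0 \<or> DQ \<le> i) \<longrightarrow> X i j = (0::complex)}"
  define E where "E = (\<lambda>i. unit i 0) ` {..<DQ}"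
  have finE: "finite E" and cardE: "card E \<le> DQ" unfolding E_def
    using card_image_le[of "{..<DQ}" "\<lambda>i. unit i 0"] by auto
  have subZ: "M.subspace Z" unfolding M.subspace_def Z_def
    by (auto simp: msc_def plus_fun_def zero_fun_def)
  have ZE: "Z \<subseteq> M.span E"
  proof
    fix X assume X: "X \<in> Z"
    have "X = (\<Sum>i<DQ. msc (X i 0) (unit i 0))"
    proof (rule ext, rule ext)
      fix a b
      have "(\<Sum>i<DQ. msc (X i 0) (unit i 0)) a b = (\<Sum>i<DQ. if i = a \<and> b = 0 then X a b else 0)"
        unfolding sum_fun_apply2 by (rule sum.cong) (auto simp: msc_def unit_def)
      also have "\<dots> = X a b" using X unfolding Z_def by (cases "b = 0"; cases "a < DQ") (auto simp: not_le)
      finally show "X a b = (\<Sum>i<DQ. msc (X i 0) (unit i 0)) a b" by simp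
    qed
    also have "\<dots> \<in> M.span E"
    proof (rule M.span_sum)
      fix i assume "i \<in> {..<DQ}"
      then have "unit i 0 \<in> E" unfolding E_def by blast
      then show "msc (X i 0) (unit i 0) \<in> M.span E"
        by (intro M.span_scale M.span_base)
    qed
    finally show "X \<in> M.span E" .
  qed
  define L where "L k = {a \<in> S. \<forall>t<k. \<forall>i. a i t = 0}" for k
  define V where "V k = col k ` L k" for k
  have LS: "L k \<subseteq> S" for k unfolding L_def by auto
  have VZ: "V k \<subseteq> Z" for k
  proof
    fix x assume "x \<in> V k"
    then obtain a where a: "a \<in> L k" "x = col k a" unfolding V_def by auto
    then have "a \<in> Q" using LS SQ by blast
    then show "x \<in> Z" unfolding Z_def Q_def a(2) col_def by auto
  qed
  have VE: "V k \<subseteq> M.span E" for k using VZ ZE by blast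
  have subL: "M.subspace (L k)" for k
    using subS unfolding M.subspace_def L_def by (auto simp: msc_def plus_fun_def zero_fun_def)
  have LQ: "L k \<subseteq> M.span EE" for k using SQ QE LS by blast
  have ker: "{x \<in> L k. col k x = 0} = L (Suc k)" for k
  proof -
    have "col k x = 0 \<longleftrightarrow> (\<forall>i. x i k = 0)" for x
    proof
      assume "col k x = 0"
      show "\<forall>i. x i k = 0"
      proof
        fix i
        have "col k x i 0 = (0::nat\<Rightarrow>nat\<Rightarrow>complex) i 0" using \<open>col k x = 0\<close> by simp
        then show "x i k = 0" by (simp add: col_def zero_fun_def)
      qed
    next
      assume "\<forall>i. x i k = 0"
      then show "col k x = 0" unfolding col_def by (auto simp: zero_fun_def fun_eq_iff)
    qed
    then show ?thesis unfolding L_def using less_Suc_eq by auto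
  qed
  have rn: "M.dim (L k) \<le> M.dim (V k) + M.dim (L (Suc k))" for k
  proof -
    have VE': "col k ` L k \<subseteq> M.span E" using VE[of k] unfolding V_def .
    have "M.dim (L k) \<le> M.dim (col k ` L k) + M.dim {x \<in> L k. col k x = 0}"
      by (rule M.rank_nullity_le[OF col_add col_scale subL LQ finEE VE' finE])
    then show ?thesis using ker[of k] unfolding V_def by simp
  qed
  have SC: "SCp DQ a b" if "a \<in> S" "b \<in> S" for a b
  proof -
    have gen: "SCp DQ (Ut j) (Ut l)" if "j < K" "l < K" for j l
      unfolding SCp_def
    proof (intro allI)
      fix p q
      show "(\<Sum>i<DQ. cnj (Ut j i p) * Ut l i q) = (\<Sum>i<DQ. Ut l p i * cnj (Ut j q i))"
      proof (cases "p < DQ \<and> q < DQ")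
        case True
        have "mm DQ (adj (U j)) (U l) p q = mm DQ (U l) (adj (U j)) p q"
          using star_commute[of DQ "U j" "U l" p q] assms(1,2) that True by auto
        then show ?thesis using True unfolding mm_def adj_def Ut_def
          by (auto intro!: sum.cong)
      next
        case False
        then show ?thesis unfolding Ut_def by auto
      qed
    qed
    have st1: "\<forall>b\<in>S. SCp DQ a' b" if "a' \<in> Us" for a'
    proof
      fix b assume "b \<in> S"
      then show "SCp DQ a' b" unfolding S_def
      proof (rule M.span_induct[where P = "\<lambda>b. SCp DQ a' b"])
        show "M.subspace {b. SCp DQ a' b}" by (rule SCp_sub_right)
        fix x assume "x \<in> Us"
        then show "SCp DQ a' x" using that gen unfolding Us_def by auto
      qed
    qed
    from that(1) show ?thesis unfolding S_def
    proof (rule M.span_induct[where P = "\<lambda>a. SCp DQ a b"])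
      show "M.subspace {a. SCp DQ a b}" by (rule SCp_sub_left)
      fix x assume "x \<in> Us"
      then show "SCp DQ x b" using st1 that(2) by auto
    qed
  qed
  have orth: "ip DQ x y = 0" if x: "x \<in> V k" and y: "y \<in> V t" and kt: "k < t" for x y k t
  proof -
    obtain b where b: "b \<in> L k" "x = col k b" using x unfolding V_def by auto
    obtain a where a: "a \<in> L t" "y = col t a" using y unfolding V_def by auto
    have aS: "a \<in> S" and bS: "b \<in> S" using a b LS by auto
    have ak: "a i k = 0" for i using a(1) kt unfolding L_def by auto
    have "(\<Sum>i<DQ. cnj (a i k) * a i k) = (\<Sum>i<DQ. a k i * cnj (a k i))"
      using SC[OF aS aS] unfolding SCp_def by blast
    then have "(\<Sum>i<DQ. cnj (a k i) * a k i) = 0" using ak by (simp add: mult.commute)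
    then have ak2: "\<forall>i<DQ. a k i = 0" by (rule sum_cnj_zero)
    have "(\<Sum>i<DQ. cnj (a i t) * b i k) = (\<Sum>i<DQ. b t i * cnj (a k i))"
      using SC[OF aS bS] unfolding SCp_def by blast
    also have "\<dots> = 0" using ak2 by simp
    finally have z: "(\<Sum>i<DQ. cnj (a i t) * b i k) = 0" .
    have "ip DQ x y = (\<Sum>i<DQ. cnj (b i k) * a i t)" unfolding ip_def b(2) a(2) col_def by simp
    also have "\<dots> = cnj (\<Sum>i<DQ. cnj (a i t) * b i k)" by (simp add: mult.commute)
    also have "\<dots> = 0" using z by simp
    finally show ?thesis .
  qed
  define W where "W k = (\<Union>t\<in>{Suc k..<DQ}. V t)" for k
  have WE: "W k \<subseteq> M.span E" for k using VE unfolding W_def by blast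
  have disj: "M.span (V k) \<inter> M.span (W k) = {0}" for k
  proof -
    have o1: "ip DQ x y = 0" if x: "x \<in> M.span (V k)" and y: "y \<in> W k" for x y
      using x
    proof (rule M.span_induct[where P = "\<lambda>x. ip DQ x y = 0"])
      show "M.subspace {x. ip DQ x y = 0}" by (rule ip_sub_left)
      fix x' assume "x' \<in> V k"
      then show "ip DQ x' y = 0" using y orth unfolding W_def by auto
    qed
    have o2: "ip DQ x y = 0" if x: "x \<in> M.span (V k)" and y: "y \<in> M.span (W k)" for x y
      using y
    proof (rule M.span_induct[where P = "\<lambda>y. ip DQ x y = 0"])
      show "M.subspace {y. ip DQ x y = 0}" by (rule ip_sub_right)
      fix y' assume "y' \<in> W k"
      then show "ip DQ x y' = 0" using o1 x by auto
    qed
    have spZ: "M.span (V k) \<subseteq> Z" by (rule M.span_minimal[OF VZ subZ])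
    show ?thesis
    proof (rule set_eqI, rule iffI)
      fix x assume "x \<in> M.span (V k) \<inter> M.span (W k)"
      then have x1: "x \<in> M.span (V k)" and x2: "x \<in> M.span (W k)" by auto
      have "ip DQ x x = 0" using o2[OF x1 x2] .
      then have "\<forall>i<DQ. x i 0 = 0" unfolding ip_def by (rule sum_cnj_zero)
      moreover have "x \<in> Z" using x1 spZ by auto
      ultimately have "x = 0" unfolding Z_def
      proof (intro ext)
        fix i j
        assume h1: "\<forall>i<DQ. x i 0 = 0" and h2: "x \<in> {X. \<forall>i j. (j \<noteq> 0 \<or> DQ \<le> i) \<longrightarrow> X i j = 0}"
        show "x i j = 0 i j"
        proof (cases "j = 0 \<and> i < DQ")
          case True then show ?thesis using h1 by (simp add: zero_fun_def)
        next
          case False then have "j \<noteq> 0 \<or> DQ \<le> i" by auto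
          then show ?thesis using h2 by (auto simp: zero_fun_def)
        qed
      qed
      then show "x \<in> {0}" by simp
    next
      fix x :: "nat \<Rightarrow> nat \<Rightarrow> complex" assume "x \<in> {0}"
      then show "x \<in> M.span (V k) \<inter> M.span (W k)" using M.span_zero by auto
    qed
  qed
  have LDQ: "M.dim (L DQ) = 0"
  proof -
    have "L DQ \<subseteq> M.span {}"
    proof
      fix a assume a: "a \<in> L DQ"
      then have "a \<in> Q" using LS SQ by auto
      then have "a = 0" using a unfolding L_def Q_def
      proof (intro ext)
        fix i j
        assume h1: "a \<in> {X. \<forall>i k. (DQ \<le> i \<or> DQ \<le> k) \<longrightarrow> X i k = 0}"
          and h2: "a \<in> {a \<in> S. \<forall>t<DQ. \<forall>i. a i t = 0}"
        show "a i j = 0 i j"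
        proof (cases "j < DQ")
          case True then show ?thesis using h2 by (simp add: zero_fun_def)
        next
          case False then show ?thesis using h1 by (simp add: zero_fun_def)
        qed
      qed
      then show "a \<in> M.span {}" by simp
    qed
    then show ?thesis using M.dim_le_card[of "L DQ" "{}"] by simp
  qed
  have main: "M.dim (L (DQ - m)) \<le> M.dim (\<Union>t\<in>{DQ - m..<DQ}. V t)" if "m \<le> DQ" for m
    using that
  proof (induction m)
    case 0
    then show ?case using LDQ by simp
  next
    case (Suc m)
    define k where "k = DQ - Suc m"
    have k1: "DQ - m = Suc k" using Suc.prems unfolding k_def by simp
    have U: "(\<Union>t\<in>{k..<DQ}. V t) = V k \<union> W k"
    proof -
      have "{k..<DQ} = insert k {Suc k..<DQ}" using Suc.prems k_def by auto
      then show ?thesis unfolding W_def by simp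
    qed
    have "M.dim (L k) \<le> M.dim (V k) + M.dim (L (Suc k))" by (rule rn)
    also have "\<dots> \<le> M.dim (V k) + M.dim (W k)" using Suc.IH Suc.prems k1 unfolding W_def by simp
    also have "\<dots> \<le> M.dim (V k \<union> W k)"
      by (rule M.dim_union_ge[OF _ VE WE finE]) (simp add: disj)
    finally show ?case using U k_def by simp
  qed
  have "M.dim (L 0) \<le> M.dim (\<Union>t\<in>{0..<DQ}. V t)" using main[of DQ] by simp
  also have "\<dots> \<le> card E" using M.dim_le_card[OF _ finE] VE by blast
  finally have "M.dim (L 0) \<le> DQ" using cardE by simp
  moreover have "L 0 = S" unfolding L_def by simp
  ultimately show ?thesis using dimS by simp
qed

end
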